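(* If $G$ is a connected graph with $n$ vertices and $k>0$ basis forced vertices, then $k\leq n-\dim(G)-1$. Moreover, $k\leq \frac{n-1}{2}$.
   Context: All graphs are finite and simple. For vertices $u,v$ of a connected graph $G$, $d(u,v)$ is the length of a shortest $u$–$v$ path. A set $R\subseteq V(G)$ is a resolving set if for all distinct $x,y\in V(G)$ there is $r\in R$ with $d(r,x)\neq d(r,y)$. The metric dimension $\dim(G)$ is the minimum cardinality of a resolving set, and a resolving set of cardinality $\dim(G)$ is a metric basis. A vertex is a basis forced vertex if it belongs to every metric basis of $G$. *)

theory Defs
  imports Main
begin

definition simple_graph :: "'a set \<Rightarrow> ('a \<Rightarrow> 'a \<Rightarrow> bool) \<Rightarrow> bool" where
  "simple_graph V E \<longleftrightarrow> finite V \<and> (\<forall>u v. E u v \<longrightarrow> u \<in> V \<and> v \<in> V)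
     \<and> (\<forall>u v. E u v \<longrightarrow> E v u) \<and> (\<forall>v. \<not> E v v)"

definition is_walk :: "'a set \<Rightarrow> ('a \<Rightarrow> 'a \<Rightarrow> bool) \<Rightarrow> 'a list \<Rightarrow> bool" where
  "is_walk V E p \<longleftrightarrow> p \<noteq> [] \<and> set p \<subseteq> V \<and> (\<forall>i. Suc i < length p \<longrightarrow> E (p ! i) (p ! Suc i))"

definition has_walk :: "'a set \<Rightarrow> ('a \<Rightarrow> 'a \<Rightarrow> bool) \<Rightarrow> 'a \<Rightarrow> 'a \<Rightarrow> nat \<Rightarrow> bool" where
  "has_walk V E u v n \<longleftrightarrow> (\<exists>p. is_walk V E p \<and> hd p = u \<and> last p = v \<and> length p = Suc n)"

definition connected_graph :: "'a set \<Rightarrow> ('a \<Rightarrow> 'a \<Rightarrow> bool) \<Rightarrow> bool" where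
  "connected_graph V E \<longleftrightarrow> V \<noteq> {} \<and> (\<forall>u\<in>V. \<forall>v\<in>V. \<exists>n. has_walk V E u v n)"

definition gdist :: "'a set \<Rightarrow> ('a \<Rightarrow> 'a \<Rightarrow> bool) \<Rightarrow> 'a \<Rightarrow> 'a \<Rightarrow> nat" where
  "gdist V E u v = (LEAST n. has_walk V E u v n)"

definition resolving_set :: "'a set \<Rightarrow> ('a \<Rightarrow> 'a \<Rightarrow> bool) \<Rightarrow> 'a set \<Rightarrow> bool" where
  "resolving_set V E R \<longleftrightarrow> R \<subseteq> V \<and>
     (\<forall>x\<in>V. \<forall>y\<in>V. x \<noteq> y \<longrightarrow> (\<exists>r\<in>R. gdist V E r x \<noteq> gdist V E r y))"

definition metric_dim :: "'a set \<Rightarrow> ('a \<Rightarrow> 'a \<Rightarrow> bool) \<Rightarrow> nat" where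
  "metric_dim V E = (LEAST k. \<exists>R. resolving_set V E R \<and> card R = k)"

definition metric_basis :: "'a set \<Rightarrow> ('a \<Rightarrow> 'a \<Rightarrow> bool) \<Rightarrow> 'a set \<Rightarrow> bool" where
  "metric_basis V E R \<longleftrightarrow> resolving_set V E R \<and> card R = metric_dim V E"

definition basis_forced_vertices :: "'a set \<Rightarrow> ('a \<Rightarrow> 'a \<Rightarrow> bool) \<Rightarrow> 'a set" where
  "basis_forced_vertices V E = {v \<in> V. \<forall>R. metric_basis V E R \<longrightarrow> v \<in> R}"

end

theory Submission
  imports Defs
begin

lemma gd_self:
  assumes "b \<in> V" shows "gdist V E b b = 0"
proof -
  have "has_walk V E b b 0"
    unfolding has_walk_def is_walk_def using assms by (intro exI[of _ "[b]"]) auto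
  then show ?thesis unfolding gdist_def by (metis Least_le le_zero_eq)
qed

lemma gd_pos:
  assumes "connected_graph V E" "b \<in> V" "y \<in> V" "b \<noteq> y"
  shows "gdist V E b y \<noteq> 0"
proof
  assume h: "gdist V E b y = 0"
  obtain m where "has_walk V E b y m" using assms unfolding connected_graph_def by blast
  then have "has_walk V E b y (gdist V E b y)" unfolding gdist_def by (rule LeastI)
  then obtain p where "hd p = b" "last p = y" "length p = Suc 0" "p \<noteq> []"
    using h unfolding has_walk_def is_walk_def by auto
  then show False using assms(4)
    by (metis One_nat_def hd_conv_nth last_conv_nth diff_Suc_1)
qed

lemma gd_sep:
  assumes "connected_graph V E" "x \<in> V" "y \<in> V" "x \<noteq> y"
  shows "gdist V E x x \<noteq> gdist V E x y"
  using gd_self[OF assms(2)] gd_pos[OF assms(1,2,3,4)] by simp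

lemma not_res:
  assumes "\<not> resolving_set V E R" "R \<subseteq> V"
  obtains x y where "x \<in> V" "y \<in> V" "x \<noteq> y" "\<forall>r\<in>R. gdist V E r x = gdist V E r y"
  using assms unfolding resolving_set_def by blast

lemma outside:
  assumes "connected_graph V E" "x \<in> V" "y \<in> V" "x \<noteq> y" "\<forall>r\<in>R. gdist V E r x = gdist V E r y"
  shows "x \<notin> R" "y \<notin> R"
  using assms gd_sep[of V E x y] gd_sep[of V E y x] by (metis, metis)

lemma key:
  assumes conn: "connected_graph V E" and fin: "finite V"
    and B: "metric_basis V E B" and v: "v \<in> basis_forced_vertices V E"
  shows "\<exists>x y. x \<in> V - B \<and> y \<in> V - B \<and> x \<noteq> y \<and> (\<forall>b\<in>B-{v}. gdist V E b x = gdist V E b y)"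
proof -
  have BV: "B \<subseteq> V" and cB: "card B = metric_dim V E" and resB: "resolving_set V E B"
    using B unfolding metric_basis_def resolving_set_def by auto
  have finB: "finite B" using BV fin finite_subset by blast
  have vB: "v \<in> B" using v B unfolding basis_forced_vertices_def by blast
  have vV: "v \<in> V" using vB BV by blast
  have "\<not> resolving_set V E (B - {v})"
  proof
    assume "resolving_set V E (B - {v})"
    then have "metric_dim V E \<le> card (B - {v})"
      unfolding metric_dim_def by (intro Least_le) blast
    moreover have "card (B - {v}) < card B" using finB vB by (meson card_Diff1_less)
    ultimately show False using cB by simp
  qed
  then obtain x y where xy: "x \<in> V" "y \<in> V" "x \<noteq> y" "\<forall>r\<in>B-{v}. gdist V E r x = gdist V E r y"
    using BV by (auto elim: not_res)
  note o = outside[OF conn xy]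
  show ?thesis
  proof (cases "x \<noteq> v \<and> y \<noteq> v")
    case True then show ?thesis using xy o by blast
  next
    case False
    then obtain z where z: "z \<in> V - B" "\<forall>r\<in>B-{v}. gdist V E r v = gdist V E r z"
      using xy o by (metis DiffI insertE insert_Diff vB)
    define B' where "B' = insert z (B - {v})"
    have B'V: "B' \<subseteq> V" using z BV B'_def by auto
    have "card B' = card B" unfolding B'_def using finB vB z
      by (simp add: card_Diff1_less) (metis Suc_pred card_gt_0_iff empty_iff)
    moreover have "v \<notin> B'" using z vB B'_def by auto
    ultimately have "\<not> resolving_set V E B'"
      using v cB unfolding basis_forced_vertices_def metric_basis_def by auto
    then obtain x' y' where xy': "x' \<in> V" "y' \<in> V" "x' \<noteq> y'" "\<forall>r\<in>B'. gdist V E r x' = gdist V E r y'"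
      using B'V by (auto elim: not_res)
    note o' = outside[OF conn xy']
    show ?thesis
    proof (cases "x' \<noteq> v \<and> y' \<noteq> v")
      case True then show ?thesis using xy' o' B'_def by blast
    next
      case False
      then obtain w where w: "w \<in> V - B" "w \<noteq> z" "\<forall>r\<in>B-{v}. gdist V E r v = gdist V E r w"
        using xy' o' B'_def by (metis DiffI insertE insert_Diff insertCI vB)
      show ?thesis using w z by (intro exI[of _ z] exI[of _ w]) auto
    qed
  qed
qed

lemma count:
  fixes g :: "'a \<Rightarrow> 'a \<Rightarrow> nat"
  assumes "finite S" "S \<subseteq> F" "finite W"
    and P: "\<forall>v\<in>F. \<exists>x\<in>W. \<exists>y\<in>W. (\<forall>b\<in>B. b \<noteq> v \<longrightarrow> g b x = g b y) \<and> (\<exists>b\<in>B. g b x \<noteq> g b y)"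
  shows "card ((\<lambda>x b. if b \<in> B - S then g b x else 0) ` W) + card S \<le> card W"
  using assms(1,2)
proof (induction S rule: finite_induct)
  case empty then show ?case by (simp add: card_image_le assms(3))
next
  case (insert v S)
  define A where "A = (\<lambda>x b. if b \<in> B - S then g b x else 0) ` W"
  define h where "h = (\<lambda>(\<phi>::'a \<Rightarrow> nat) b. if b = v then 0 else \<phi> b)"
  have eqf: "(\<lambda>x b. if b \<in> B - insert v S then g b x else 0) = h \<circ> (\<lambda>x b. if b \<in> B - S then g b x else 0)"
  proof (rule ext)
    fix x show "(\<lambda>b. if b \<in> B - insert v S then g b x else 0) = (h \<circ> (\<lambda>x b. if b \<in> B - S then g b x else 0)) x"
      unfolding h_def o_def by (rule ext) simp
  qed
  have eq: "(\<lambda>x b. if b \<in> B - insert v S then g b x else 0) ` W = h ` A"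
    unfolding A_def eqf by (rule image_comp[symmetric])
  have finA: "finite A" using assms(3) A_def by simp
  obtain x y where xy: "x \<in> W" "y \<in> W" "\<forall>b\<in>B. b \<noteq> v \<longrightarrow> g b x = g b y" "\<exists>b\<in>B. g b x \<noteq> g b y"
  proof -
    have vF: "v \<in> F" using insert.prems by simp
    show ?thesis using bspec[OF P vF] that by blast
  qed
  then obtain b where b: "b \<in> B" "g b x \<noteq> g b y" by blast
  then have bv: "b = v" using xy(3) by blast
  let ?f = "\<lambda>x b. if b \<in> B - S then g b x else 0"
  have "?f x v \<noteq> ?f y v" using b bv insert(2) by simp
  then have "?f x \<noteq> ?f y" by metis
  moreover have "h (?f x) = h (?f y)" unfolding h_def
  proof (rule ext)
    fix c show "(if c = v then 0 else ?f x c) = (if c = v then 0 else ?f y c)"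
      using xy(3) by simp
  qed
  moreover have "?f x \<in> A" "?f y \<in> A" using xy A_def by auto
  ultimately have "\<not> inj_on h A" by (meson inj_onD)
  then have "card (h ` A) < card A"
  proof -
    have "card (h ` A) \<le> card A" using finA by (rule card_image_le)
    moreover have "card (h ` A) \<noteq> card A" using finA eq_card_imp_inj_on \<open>\<not> inj_on h A\<close> by blast
    ultimately show ?thesis by simp
  qed
  moreover have "card A + card S \<le> card W" using insert.IH insert.prems A_def by simp
  moreover have "card (insert v S) = Suc (card S)" using insert.hyps by simp
  ultimately show ?case using eq by simp
qed

theorem theorem8:
  fixes V :: "'a set" and E :: "'a \<Rightarrow> 'a \<Rightarrow> bool" and n k :: nat
  assumes "simple_graph V E"
    and "connected_graph V E"
    and "card V = n"
    and "card (basis_forced_vertices V E) = k"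
    and "k > 0"
  shows "k \<le> n - metric_dim V E - 1 \<and> 2 * k \<le> n - 1"
proof -
  have fin: "finite V" using assms(1) unfolding simple_graph_def by blast
  have "resolving_set V E V"
    unfolding resolving_set_def using gd_sep[OF assms(2)] by blast
  then have "\<exists>R. resolving_set V E R \<and> card R = metric_dim V E"
  proof -
    have "\<exists>k R. resolving_set V E R \<and> card R = k" using \<open>resolving_set V E V\<close> by blast
    from LeastI_ex[OF this] show ?thesis unfolding metric_dim_def .
  qed
  then obtain B where B: "metric_basis V E B" unfolding metric_basis_def by blast
  have BV: "B \<subseteq> V" and cB: "card B = metric_dim V E" and resB: "resolving_set V E B"
    using B unfolding metric_basis_def resolving_set_def by auto
  define F where "F = basis_forced_vertices V E"
  have FB: "F \<subseteq> B" using B unfolding F_def basis_forced_vertices_def by blast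
  have finB: "finite B" using BV fin finite_subset by blast
  have finF: "finite F" using FB finB finite_subset by blast
  have P: "\<forall>v\<in>F. \<exists>x\<in>V-B. \<exists>y\<in>V-B. (\<forall>b\<in>B. b \<noteq> v \<longrightarrow> gdist V E b x = gdist V E b y) \<and> (\<exists>b\<in>B. gdist V E b x \<noteq> gdist V E b y)"
  proof
    fix v assume "v \<in> F"
    then obtain x y where xy: "x \<in> V - B" "y \<in> V - B" "x \<noteq> y" "\<forall>b\<in>B-{v}. gdist V E b x = gdist V E b y"
      using key[OF assms(2) fin B] F_def by blast
    then have "\<exists>b\<in>B. gdist V E b x \<noteq> gdist V E b y" using resB unfolding resolving_set_def by blast
    then show "\<exists>x\<in>V-B. \<exists>y\<in>V-B. (\<forall>b\<in>B. b \<noteq> v \<longrightarrow> gdist V E b x = gdist V E b y) \<and> (\<exists>b\<in>B. gdist V E b x \<noteq> gdist V E b y)"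
      using xy by blast
  qed
  have c: "card ((\<lambda>x b. if b \<in> B - F then gdist V E b x else 0) ` (V - B)) + card F \<le> card (V - B)"
    using count[OF finF order_refl _ P] fin by blast
  have "F \<noteq> {}" using assms(4,5) F_def by auto
  then have "V - B \<noteq> {}" using P by blast
  then have "card ((\<lambda>x b. if b \<in> B - F then gdist V E b x else 0) ` (V - B)) \<ge> 1"
    using fin by (simp add: Suc_leI card_gt_0_iff)
  then have "k + 1 \<le> card (V - B)" using c assms(4) F_def by simp
  moreover have "card (V - B) = n - metric_dim V E" using card_Diff_subset[OF finB BV] assms(3) cB by simp
  moreover have "k \<le> metric_dim V E" using card_mono[OF finB FB] cB assms(4) F_def by simp
  ultimately show ?thesis by linarith
qed

end
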